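(* Let $p\in\mathbb{N}$ and let $r_p$ be the maximal positive root of the equation $8r^{2p}+r^{2(p-1)}-6r^{p-1}+1=0$. Then $2r_p^{p+1}\le 1$. *)

theory Defs
  imports Complex_Main
begin

text \<open>The left-hand side of the equation 8 r^(2p) + r^(2(p-1)) - 6 r^(p-1) + 1 = 0,
  with integer exponents so that p = 0 is also meaningful.\<close>
definition rp_poly :: "nat \<Rightarrow> real \<Rightarrow> real" where
  "rp_poly p r = 8 * r powi (2 * int p) + r powi (2 * (int p - 1)) - 6 * r powi (int p - 1) + 1"

end

theory Submission
  imports Defs
begin

theorem lemma1:
  fixes p :: nat and r :: real
  assumes "r > 0" and "rp_poly p r = 0"
    and "\<And>s. s > 0 \<Longrightarrow> rp_poly p s = 0 \<Longrightarrow> s \<le> r"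
  shows "2 * r ^ (p + 1) \<le> 1"
proof (cases p)
  case 0
  have e: "8 + inverse (r^2) - 6 * inverse r + 1 = 0"
    using assms(2) unfolding rp_poly_def 0 by (simp add: power_int_minus)
  hence "r^2 * (8 + inverse (r^2) - 6 * inverse r + 1) = 0" by simp
  hence "9 * r^2 - 6 * r + 1 = 0" using assms(1)
    by (simp add: algebra_simps power2_eq_square)
  hence "(3*r - 1)^2 = 0" by (simp add: power2_eq_square algebra_simps)
  hence "r = 1/3" by simp
  thus ?thesis using 0 by simp
next
  case (Suc q)
  define x where "x = r ^ q"
  have xp: "x > 0" using assms(1) by (simp add: x_def)
  have a: "r powi (2 * int p) = x^2 * r^2"
  proof -
    have h: "2 * int p = int (2*q+2)" using Suc by simp
    hence "r powi (2 * int p) = r ^ (2*q+2)" by (simp only: h power_int_of_nat)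
    thus ?thesis by (simp add: x_def power_add power_mult power2_eq_square algebra_simps)
  qed
  have b: "r powi (2 * (int p - 1)) = x^2"
  proof -
    have h: "2 * (int p - 1) = int (2*q)" using Suc by simp
    have "r powi (2 * (int p - 1)) = r ^ (2*q)" by (simp only: h power_int_of_nat)
    thus ?thesis by (simp add: x_def power_mult power2_eq_square algebra_simps)
  qed
  have c: "r powi (int p - 1) = x"
  proof -
    have h: "int p - 1 = int q" using Suc by simp
    show ?thesis by (simp only: h power_int_of_nat x_def)
  qed
  have eq: "8 * (x^2 * r^2) + x^2 - 6 * x + 1 = 0"
    using assms(2) unfolding rp_poly_def a b c .
  have "2 * x^2 * r^2 \<le> x"
  proof -
    have "8 * (x^2*r^2) = 6*x - x^2 - 1" using eq by linarith
    moreover have "0 \<le> (x - 1)^2" by simp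
    ultimately show ?thesis by (simp add: power2_eq_square algebra_simps)
  qed
  hence "x * (2 * x * r^2) \<le> x * 1" by (simp add: power2_eq_square algebra_simps)
  hence "2 * x * r^2 \<le> 1" using xp by (simp only: mult_le_cancel_left_pos)
  moreover have "r ^ (p+1) = x * r^2" using Suc by (simp add: x_def power2_eq_square algebra_simps)
  ultimately show ?thesis by (simp add: algebra_simps)
qed

end
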